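(* Let $A\in\mathbb{N}^{n\times m}$ have distinct columns. If the extreme points of $\mathrm{New}(A)$ are affinely independent and the nonextremal columns of $A$, reduced modulo 2, are linearly independent over $\mathbb{F}_2$, then $C_{\mathrm{POLY\text{-}SAGE}}(A)=C_{\mathrm{NNP}}(A)$.
   Context: For $A\in\mathbb{N}^{n\times m}$ with distinct columns $a_i$ and $c\in\mathbb{R}^m$, $\mathrm{Poly}(A,c)$ is the polynomial $x\mapsto\sum_{i=1}^m c_i x^{a_i}$ on $\mathbb{R}^n$ (with $x^{a}=\prod_j x_j^{a_j}$); a column $a_i$ is even if $a_i\in(2\mathbb{N})^n$. $C_{\mathrm{NNP}}(A)=\{c:\mathrm{Poly}(A,c)(x)\ge 0\ \forall x\in\mathbb{R}^n\}$. $\mathrm{Sig}(A,c)$ is $x\mapsto\sum_i c_i\exp(a_i^\top x)$; $C_{\mathrm{NNS}}(A)=\{c:\mathrm{Sig}(A,c)\ge 0\text{ on }\mathbb{R}^n\}$; $C_{\mathrm{AGE}}(A,k)=\{c\in C_{\mathrm{NNS}}(A): c_i\ge 0\ \forall i\ne k\}$; $C_{\mathrm{SAGE}}(A)=\sum_k C_{\mathrm{AGE}}(A,k)$. The signomial representative of $c$ is $\hat c\in\mathbb{R}^m$ with $\hat c_i=c_i$ if $a_i$ is even and $\hat c_i=-|c_i|$ otherwise; $C_{\mathrm{POLY\text{-}SAGE}}(A)=\{c\in\mathbb{R}^m:\hat c\in C_{\mathrm{SAGE}}(A)\}$. $\mathrm{New}(A)=\mathrm{conv}\{a_i\}$; $a_i$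 is nonextremal if it is not an extreme point of $\mathrm{New}(A)$. *)

theory Defs
  imports "HOL-Analysis.Analysis"
begin

text \<open>A matrix A in N^(n x m) is given by its family of columns
  a :: 'm \<Rightarrow> nat ^ 'n  (columns indexed by the finite type 'm, rows by 'n).\<close>

definition Poly :: "('m::finite \<Rightarrow> nat ^ 'n::finite) \<Rightarrow> ('m \<Rightarrow> real) \<Rightarrow> real ^ 'n \<Rightarrow> real" where
  "Poly a c x = (\<Sum>i\<in>UNIV. c i * (\<Prod>j\<in>UNIV. (x $ j) ^ (a i $ j)))"

definition C_NNP :: "('m::finite \<Rightarrow> nat ^ 'n::finite) \<Rightarrow> ('m \<Rightarrow> real) set" where
  "C_NNP a = {c. \<forall>x. Poly a c x \<ge> 0}"

definition col_real :: "nat ^ 'n::finite \<Rightarrow> real ^ 'n" where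
  "col_real v = (\<chi> j. real (v $ j))"

definition Sig :: "('m::finite \<Rightarrow> nat ^ 'n::finite) \<Rightarrow> ('m \<Rightarrow> real) \<Rightarrow> real ^ 'n \<Rightarrow> real" where
  "Sig a c x = (\<Sum>i\<in>UNIV. c i * exp (col_real (a i) \<bullet> x))"

definition C_NNS :: "('m::finite \<Rightarrow> nat ^ 'n::finite) \<Rightarrow> ('m \<Rightarrow> real) set" where
  "C_NNS a = {c. \<forall>x. Sig a c x \<ge> 0}"

definition C_AGE :: "('m::finite \<Rightarrow> nat ^ 'n::finite) \<Rightarrow> 'm \<Rightarrow> ('m \<Rightarrow> real) set" where
  "C_AGE a k = {c \<in> C_NNS a. \<forall>i. i \<noteq> k \<longrightarrow> c i \<ge> 0}"

definition C_SAGE :: "('m::finite \<Rightarrow> nat ^ 'n::finite) \<Rightarrow> ('m \<Rightarrow> real) set" where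
  "C_SAGE a = {c. \<exists>\<nu>. (\<forall>k. \<nu> k \<in> C_AGE a k) \<and> c = (\<lambda>i. \<Sum>k\<in>UNIV. \<nu> k i)}"

definition even_col :: "nat ^ 'n::finite \<Rightarrow> bool" where
  "even_col v \<longleftrightarrow> (\<forall>j. even (v $ j))"

definition sig_rep :: "('m::finite \<Rightarrow> nat ^ 'n::finite) \<Rightarrow> ('m \<Rightarrow> real) \<Rightarrow> ('m \<Rightarrow> real)" where
  "sig_rep a c = (\<lambda>i. if even_col (a i) then c i else - \<bar>c i\<bar>)"

definition C_POLY_SAGE :: "('m::finite \<Rightarrow> nat ^ 'n::finite) \<Rightarrow> ('m \<Rightarrow> real) set" where
  "C_POLY_SAGE a = {c. sig_rep a c \<in> C_SAGE a}"

definition Newton :: "('m::finite \<Rightarrow> nat ^ 'n::finite) \<Rightarrow> (real ^ 'n) set" where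
  "Newton a = convex hull (range (\<lambda>i. col_real (a i)))"

definition nonextremal :: "('m::finite \<Rightarrow> nat ^ 'n::finite) \<Rightarrow> 'm set" where
  "nonextremal a = {i. \<not> (col_real (a i) extreme_point_of Newton a)}"

text \<open>Since the
  only F2-scalars are 0 and 1, a linear dependence is exactly a nonempty
  subset S of I whose columns sum to the zero vector mod 2.\<close>
definition F2_lin_indep_mod2 :: "('m::finite \<Rightarrow> nat ^ 'n::finite) \<Rightarrow> 'm set \<Rightarrow> bool" where
  "F2_lin_indep_mod2 a I \<longleftrightarrow>
     (\<forall>S\<subseteq>I. (\<forall>j. even (\<Sum>i\<in>S. a i $ j)) \<longrightarrow> S = {})"

end

theory Submission
  imports Defs
begin

definition chi :: "('m::finite \<Rightarrow> nat ^ 'n::finite) \<Rightarrow> 'm \<Rightarrow> real ^ 'n \<Rightarrow> real" where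
  "chi a i s = (\<Prod>j\<in>UNIV. (s $ j) ^ (a i $ j))"

definition sv :: "real ^ 'n::finite \<Rightarrow> bool" where
  "sv s \<longleftrightarrow> (\<forall>j. \<bar>s $ j\<bar> = 1)"

lemma chi_abs: "sv s \<Longrightarrow> \<bar>chi a i s\<bar> = 1"
  by (simp add: chi_def sv_def abs_prod power_abs)

lemma chi_pm: "sv s \<Longrightarrow> chi a i s = 1 \<or> chi a i s = -1"
  using chi_abs[of s a i] by (auto simp: abs_if split: if_splits)

lemma chi_even: "sv s \<Longrightarrow> even_col (a i) \<Longrightarrow> chi a i s = 1"
  unfolding chi_def
proof (intro prod.neutral ballI)
  fix j assume "sv s" "even_col (a i)"
  then have "even (a i $ j)" "\<bar>s $ j\<bar> = 1" by (auto simp: even_col_def sv_def)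
  then show "(s $ j) ^ (a i $ j) = 1" by (metis power_even_abs power_one)
qed

lemma chi_mult: "chi a i (\<chi> j. s $ j * t $ j) = chi a i s * chi a i t"
  by (simp add: chi_def power_mult_distrib prod.distrib)

lemma chi_ones: "chi a i (\<chi> j. 1) = 1"
  by (simp add: chi_def)

lemma chi_flip: "chi a i (\<chi> j. if j = j0 then -1 else 1) = (-1) ^ (a i $ j0)"
proof -
  have "chi a i (\<chi> j. if j = j0 then -1 else 1) = (\<Prod>j\<in>UNIV. if j = j0 then (-1) ^ (a i $ j) else 1)"
    unfolding chi_def by (intro prod.cong) auto
  also have "\<dots> = (-1) ^ (a i $ j0)" by (simp add: prod.delta)
  finally show ?thesis .
qed

lemma chi_prodpow:
  fixes T :: "'m \<Rightarrow> real ^ 'n::finite"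
  shows "chi a l (\<chi> j'. \<Prod>k\<in>I. (T k $ j') ^ (m k)) = (\<Prod>k\<in>I. (chi a l (T k)) ^ (m k))"
proof -
  have "chi a l (\<chi> j'. \<Prod>k\<in>I. (T k $ j') ^ (m k)) = (\<Prod>j'\<in>UNIV. \<Prod>k\<in>I. ((T k $ j') ^ (a l $ j')) ^ (m k))"
    unfolding chi_def by (simp add: prod_power_distrib flip: power_mult) (simp add: mult.commute)
  also have "\<dots> = (\<Prod>k\<in>I. \<Prod>j'\<in>UNIV. ((T k $ j') ^ (a l $ j')) ^ (m k))"
    by (rule prod.swap)
  also have "\<dots> = (\<Prod>k\<in>I. (chi a l (T k)) ^ (m k))"
    unfolding chi_def by (simp add: prod_power_distrib)
  finally show ?thesis .
qed

lemma sv_mult: "sv s \<Longrightarrow> sv t \<Longrightarrow> sv (\<chi> j. s $ j * t $ j)"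
  by (simp add: sv_def abs_mult)

lemma sv_prodpow: "(\<And>k. k \<in> I \<Longrightarrow> sv (T k)) \<Longrightarrow> sv (\<chi> j'. \<Prod>k\<in>I. (T k $ j') ^ (m k))"
  by (simp add: sv_def abs_prod power_abs)

lemma sv_flip: "sv (\<chi> j. if j = j0 then -1 else (1::real))"
  by (simp add: sv_def)

lemma sv_ones: "sv (\<chi> j. (1::real))"
  by (simp add: sv_def)

lemma F2_mono: "F2_lin_indep_mod2 a J \<Longrightarrow> I \<subseteq> J \<Longrightarrow> F2_lin_indep_mod2 a I"
  unfolding F2_lin_indep_mod2_def by blast

lemma neg1_pow_eq1: "((-1::real) ^ n = 1) \<longleftrightarrow> even n"
  by (cases "even n") auto

lemma F2_surj:
  fixes a :: "'m::finite \<Rightarrow> nat ^ 'n::finite"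
  assumes "F2_lin_indep_mod2 a I"
  shows "\<forall>\<tau>. (\<forall>i\<in>I. \<tau> i = 1 \<or> \<tau> i = -1) \<longrightarrow> (\<exists>s. sv s \<and> (\<forall>i\<in>I. chi a i s = \<tau> i))"
proof -
  have fin: "finite I" by simp
  show ?thesis using fin assms
  proof (induction I rule: finite_induct)
    case empty
    then show ?case using sv_ones by blast
  next
    case (insert k I)
    have F2I: "F2_lin_indep_mod2 a I" using insert.prems F2_mono by blast
    note IH = insert.IH[OF F2I]
    have "\<forall>i\<in>I. \<exists>t. sv t \<and> (\<forall>l\<in>I. chi a l t = (if l = i then -1 else 1))"
    proof
      fix i assume "i \<in> I"
      show "\<exists>t. sv t \<and> (\<forall>l\<in>I. chi a l t = (if l = i then -1 else 1))"
        using IH[rule_format, of "\<lambda>l. if l = i then -1 else 1"] by auto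
    qed
    then obtain T where T: "\<And>i. i \<in> I \<Longrightarrow> sv (T i)"
      "\<And>i l. i \<in> I \<Longrightarrow> l \<in> I \<Longrightarrow> chi a l (T i) = (if l = i then -1 else 1)"
      by metis
    have rho: "\<exists>\<rho>. sv \<rho> \<and> (\<forall>l\<in>I. chi a l \<rho> = 1) \<and> chi a k \<rho> = -1"
    proof (rule ccontr)
      assume H: "\<not> ?thesis"
      define S where "S = {i\<in>I. chi a k (T i) = -1}"
      have SI: "S \<subseteq> I" by (auto simp: S_def)
      have "\<forall>j. even (\<Sum>i\<in>insert k S. a i $ j)"
      proof
        fix j
        define \<rho> where "\<rho> = (\<chi> j'. (\<chi> jj. if jj = j then -1 else (1::real)) $ j' * (\<chi> j'. \<Prod>i\<in>I. (T i $ j') ^ (a i $ j)) $ j')"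
        have svr: "sv \<rho>" unfolding \<rho>_def
          by (intro sv_mult sv_flip sv_prodpow T(1))
        have chr: "chi a l \<rho> = (-1) ^ (a l $ j) * (\<Prod>i\<in>I. (chi a l (T i)) ^ (a i $ j))" for l
          unfolding \<rho>_def chi_mult chi_flip chi_prodpow ..
        have "\<forall>l\<in>I. chi a l \<rho> = 1"
        proof
          fix l assume l: "l \<in> I"
          have "(\<Prod>i\<in>I. (chi a l (T i)) ^ (a i $ j)) = (\<Prod>i\<in>I. if i = l then (-1) ^ (a i $ j) else 1)"
            using T(2)[OF _ l] by (intro prod.cong) auto
          also have "\<dots> = (-1) ^ (a l $ j)" using l insert.hyps(1) by (simp add: prod.delta')
          finally show "chi a l \<rho> = 1" unfolding chr
            by (simp flip: power_add)
        qed
        with H svr have "chi a k \<rho> \<noteq> -1" by blast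
        then have c1: "chi a k \<rho> = 1" using chi_pm[OF svr] by blast
        have "(\<Prod>i\<in>I. (chi a k (T i)) ^ (a i $ j)) = (\<Prod>i\<in>I. if chi a k (T i) = -1 then (-1) ^ (a i $ j) else 1)"
        proof (intro prod.cong refl)
          fix i assume "i \<in> I"
          then have "chi a k (T i) = 1 \<or> chi a k (T i) = -1" using chi_pm[OF T(1)] by blast
          then show "(chi a k (T i)) ^ (a i $ j) = (if chi a k (T i) = -1 then (-1) ^ (a i $ j) else 1)"
            by auto
        qed
        also have "\<dots> = (\<Prod>i\<in>S. (-1) ^ (a i $ j))"
          unfolding S_def by (simp add: prod.inter_filter)
        also have "\<dots> = (-1) ^ (\<Sum>i\<in>S. a i $ j)" by (simp add: power_sum)
        finally have "(-1::real) ^ (a k $ j + (\<Sum>i\<in>S. a i $ j)) = 1"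
          using c1 unfolding chr by (simp add: power_add)
        then have "even (a k $ j + (\<Sum>i\<in>S. a i $ j))" by (simp add: neg1_pow_eq1)
        moreover have "k \<notin> S" using SI insert.hyps(2) by auto
        ultimately show "even (\<Sum>i\<in>insert k S. a i $ j)" by simp
      qed
      moreover have "insert k S \<subseteq> insert k I" using SI by auto
      ultimately have "insert k S = {}" using insert.prems unfolding F2_lin_indep_mod2_def by blast
      then show False by simp
    qed
    then obtain \<rho> where r: "sv \<rho>" "\<forall>l\<in>I. chi a l \<rho> = 1" "chi a k \<rho> = -1" by blast
    show ?case
    proof (intro allI impI)
      fix \<tau> :: "'m \<Rightarrow> real" assume tau: "\<forall>i\<in>insert k I. \<tau> i = 1 \<or> \<tau> i = -1"
      then obtain s where s: "sv s" "\<forall>i\<in>I. chi a i s = \<tau> i" using IH by auto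
      show "\<exists>s. sv s \<and> (\<forall>i\<in>insert k I. chi a i s = \<tau> i)"
      proof (cases "chi a k s = \<tau> k")
        case True
        then show ?thesis using s by auto
      next
        case False
        then have "chi a k s = - \<tau> k" using chi_pm[OF s(1), of a k] tau by auto
        then show ?thesis using s r
          by (intro exI[of _ "\<chi> j. s $ j * \<rho> $ j"]) (auto simp: chi_mult sv_mult)
      qed
    qed
  qed
qed

lemma Poly_sign_exp:
  "Poly a c (\<chi> j. s $ j * exp (x $ j)) = (\<Sum>i\<in>UNIV. c i * chi a i s * exp (col_real (a i) \<bullet> x))"
  unfolding Poly_def
proof (intro sum.cong refl)
  fix i
  have e: "col_real (a i) \<bullet> x = (\<Sum>j\<in>UNIV. real (a i $ j) * x $ j)"
    by (simp add: inner_vec_def col_real_def)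
  have "(\<Prod>j\<in>UNIV. ((\<chi> j. s $ j * exp (x $ j)) $ j) ^ (a i $ j))
      = chi a i s * (\<Prod>j\<in>UNIV. exp (real (a i $ j) * x $ j))"
    by (simp add: chi_def power_mult_distrib prod.distrib exp_of_nat_mult)
  also have "\<dots> = chi a i s * exp (col_real (a i) \<bullet> x)"
    unfolding e by (simp add: exp_sum)
  finally show "c i * (\<Prod>j\<in>UNIV. ((\<chi> j. s $ j * exp (x $ j)) $ j) ^ (a i $ j))
      = c i * chi a i s * exp (col_real (a i) \<bullet> x)" by simp
qed

lemma col_real_inj: "col_real v = col_real w \<Longrightarrow> v = w"
  by (simp add: col_real_def vec_eq_iff)

lemma sum_if_in: "(\<Sum>j\<in>(UNIV::'m::finite set). if j \<in> E then g j else 0) = sum g E"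
  by (simp add: sum.If_cases)

lemma sum_split_E: "sum g (UNIV::'m::finite set) = sum g E + sum g (- E)"
  using sum.subset_diff[of E "UNIV::'m set" g] by (simp add: Compl_eq_Diff_UNIV add.commute)

lemma linsys:
  fixes v :: "'m::finite \<Rightarrow> real ^ 'n::finite"
  assumes inj: "inj_on v E" and ind: "\<not> affine_dependent (v ` E)"
  shows "\<exists>x s. \<forall>j\<in>E. v j \<bullet> x + s = t j"
proof (rule ccontr)
  assume nosol: "\<not> ?thesis"
  define f where "f = (\<lambda>(x::real^'n) (s::real). (\<chi> j. if j \<in> E then v j \<bullet> x + s else 0) :: real^'m)"
  define L where "L = {y. \<exists>x s. y = f x s}"
  have sub: "subspace L" unfolding subspace_def L_def
  proof (intro conjI ballI allI)
    show "0 \<in> {y. \<exists>x s. y = f x s}"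
      by (rule CollectI, rule exI[of _ 0], rule exI[of _ 0]) (simp add: f_def vec_eq_iff)
  next
    fix y z assume "y \<in> {y. \<exists>x s. y = f x s}" "z \<in> {y. \<exists>x s. y = f x s}"
    then obtain x s x' s' where "y = f x s" "z = f x' s'" by auto
    then show "y + z \<in> {y. \<exists>x s. y = f x s}"
      by (auto intro!: exI[of _ "x + x'"] exI[of _ "s + s'"] simp: f_def vec_eq_iff inner_add_right)
  next
    fix c and y assume "y \<in> {y. \<exists>x s. y = f x s}"
    then obtain x s where "y = f x s" by auto
    then show "c *\<^sub>R y \<in> {y. \<exists>x s. y = f x s}"
      by (auto intro!: exI[of _ "c *\<^sub>R x"] exI[of _ "c * s"] simp: f_def vec_eq_iff algebra_simps)
  qed
  define T where "T = ((\<chi> j. if j \<in> E then t j else 0) :: real^'m)"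
  have TL: "T \<notin> L"
  proof
    assume "T \<in> L"
    then obtain x s where "T = f x s" by (auto simp: L_def)
    then have "\<forall>j\<in>E. v j \<bullet> x + s = t j" by (auto simp: T_def f_def vec_eq_iff) (metis (full_types))
    with nosol show False by blast
  qed
  obtain a b where ab: "inner a T < b" "\<forall>y\<in>L. inner a y > b"
    using separating_hyperplane_closed_point[OF subspace_imp_convex[OF sub] closed_subspace[OF sub] TL] by blast
  have "0 \<in> L" using sub by (rule subspace_0)
  then have b0: "b < 0" using ab(2) by fastforce
  have orth: "inner a y = 0" if "y \<in> L" for y
  proof (rule ccontr)
    assume ne: "inner a y \<noteq> 0"
    define c where "c = (b - 1) / inner a y"
    have "c *\<^sub>R y \<in> L" using sub that by (rule subspace_scale)
    moreover have "inner a (c *\<^sub>R y) = b - 1" using ne by (simp add: c_def)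
    ultimately show False using ab(2) by fastforce
  qed
  have inf: "inner a (f x s) = (\<Sum>j\<in>E. a $ j * (v j \<bullet> x + s))" for x s
  proof -
    have "inner a (f x s) = (\<Sum>j\<in>UNIV. if j \<in> E then a $ j * (v j \<bullet> x + s) else 0)"
      by (simp add: inner_vec_def f_def if_distrib cong: if_cong)
    then show ?thesis by (simp add: sum_if_in)
  qed
  have fL: "f x s \<in> L" for x s by (auto simp: L_def)
  have s1: "(\<Sum>j\<in>E. a $ j) = 0" using orth[OF fL[of 0 1]] by (simp add: inf)
  define z where "z = (\<Sum>j\<in>E. a $ j *\<^sub>R v j)"
  have "inner z z = (\<Sum>j\<in>E. a $ j * (v j \<bullet> z))"
    by (simp add: z_def inner_sum_left)
  also have "\<dots> = 0" using orth[OF fL[of z 0]] by (simp add: inf)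
  finally have z0: "z = 0" by simp
  have a0: "\<forall>j\<in>E. a $ j = 0"
  proof (rule ccontr)
    assume "\<not> (\<forall>j\<in>E. a $ j = 0)"
    then obtain j0 where j0: "j0 \<in> E" "a $ j0 \<noteq> 0" by blast
    define U where "U w = a $ (inv_into E v w)" for w
    have "sum U (v ` E) = (\<Sum>j\<in>E. a $ j)"
      using inj by (simp add: sum.reindex U_def)
    moreover have "(\<Sum>w\<in>v ` E. U w *\<^sub>R w) = z"
      using inj by (simp add: sum.reindex U_def z_def)
    moreover have "U (v j0) \<noteq> 0" using inj j0 by (simp add: U_def)
    ultimately have "affine_dependent (v ` E)"
      using s1 z0 j0 by (subst affine_dependent_explicit_finite) (auto intro!: exI[of _ U])
    with ind show False by blast
  qed
  have "inner a T = (\<Sum>j\<in>UNIV. if j \<in> E then a $ j * t j else 0)"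
    by (simp add: inner_vec_def T_def if_distrib cong: if_cong)
  also have "\<dots> = 0" using a0 by (simp add: sum_if_in)
  finally show False using ab(1) b0 by simp
qed

definition Uf :: "'m set \<Rightarrow> ('m \<Rightarrow> 'm \<Rightarrow> real) \<Rightarrow> ('m \<Rightarrow> real) \<Rightarrow> 'm \<Rightarrow> real" where
  "Uf E lam u i = (\<Prod>j\<in>E. u j powr lam i j)"

definition Ufull :: "'m set \<Rightarrow> ('m \<Rightarrow> 'm \<Rightarrow> real) \<Rightarrow> ('m \<Rightarrow> real) \<Rightarrow> 'm \<Rightarrow> real" where
  "Ufull E lam u k = (if k \<in> E then u k else Uf E lam u k)"

lemma vertex:
  fixes e :: "'m::finite \<Rightarrow> real"
  assumes j0: "j0 \<in> E"
    and lam: "\<And>i. i \<notin> E \<Longrightarrow> sum (lam i) E = 1 \<and> lam i j0 < 1"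
    and H: "\<And>u. (\<forall>j\<in>E. u j > 0) \<Longrightarrow> 0 \<le> (\<Sum>k\<in>UNIV. e k * Ufull E lam u k)"
  shows "0 \<le> e j0"
proof -
  define G where "G \<epsilon> k = (if k \<in> E then (if k = j0 then 1 else \<epsilon>) else \<epsilon> powr (1 - lam k j0))" for \<epsilon> :: real and k
  have eqG: "Ufull E lam (\<lambda>j. if j = j0 then 1 else \<epsilon>) k = G \<epsilon> k" if ep: "\<epsilon> > 0" for \<epsilon> k
  proof (cases "k \<in> E")
    case True then show ?thesis by (simp add: Ufull_def G_def)
  next
    case False
    have fE: "finite E" by simp
    have "Uf E lam (\<lambda>j. if j = j0 then 1 else \<epsilon>) k
        = (\<Prod>j\<in>E - {j0}. (if j = j0 then 1 else \<epsilon>) powr lam k j)"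
      unfolding Uf_def using prod.remove[OF fE j0, of "\<lambda>j. (if j = j0 then 1 else \<epsilon>) powr lam k j"]
      by simp
    also have "\<dots> = (\<Prod>j\<in>E - {j0}. \<epsilon> powr lam k j)"
      by (intro prod.cong) auto
    also have "\<dots> = \<epsilon> powr (sum (lam k) (E - {j0}))" using ep by (simp add: powr_sum)
    also have "sum (lam k) (E - {j0}) = 1 - lam k j0"
      using sum.remove[OF fE j0, of "lam k"] lam[OF False] by simp
    finally show ?thesis using False by (simp add: Ufull_def G_def)
  qed
  have limk: "((\<lambda>\<epsilon>. e k * G \<epsilon> k) \<longlongrightarrow> (if k = j0 then e k else 0)) (at_right 0)" for k
  proof (cases "k \<in> E")
    case True
    then show ?thesis
    proof (cases "k = j0")
      case True then show ?thesis using j0 by (simp add: G_def)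
    next
      case False
      have "((\<lambda>\<epsilon>. e k * \<epsilon>) \<longlongrightarrow> e k * 0) (at_right (0::real))"
        by (intro tendsto_intros)
      then show ?thesis using False True by (simp add: G_def)
    qed
  next
    case False
    have "((\<lambda>\<epsilon>::real. \<epsilon> powr (1 - lam k j0)) \<longlongrightarrow> 0) (at_right 0)"
      by (rule tendsto_zero_powrI) (auto intro: tendsto_ident_at eventually_mono[OF eventually_at_right_less] simp: lam[OF False])
    then have "((\<lambda>\<epsilon>. e k * \<epsilon> powr (1 - lam k j0)) \<longlongrightarrow> e k * 0) (at_right 0)"
      by (intro tendsto_intros)
    then show ?thesis using False j0 by (auto simp: G_def)
  qed
  have lim: "((\<lambda>\<epsilon>. \<Sum>k\<in>UNIV. e k * G \<epsilon> k) \<longlongrightarrow> (\<Sum>k\<in>UNIV. if k = j0 then e k else 0)) (at_right 0)"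
    by (intro tendsto_sum limk)
  have ev: "\<forall>\<^sub>F \<epsilon> in at_right 0. 0 \<le> (\<Sum>k\<in>UNIV. e k * G \<epsilon> k)"
  proof (rule eventually_mono[OF eventually_at_right_less])
    fix \<epsilon> :: real assume ep: "0 < \<epsilon>"
    have "0 \<le> (\<Sum>k\<in>UNIV. e k * Ufull E lam (\<lambda>j. if j = j0 then 1 else \<epsilon>) k)"
      using ep by (intro H) auto
    then show "0 \<le> (\<Sum>k\<in>UNIV. e k * G \<epsilon> k)" using eqG[OF ep] by simp
  qed
  have "0 \<le> (\<Sum>k\<in>UNIV. if k = j0 then e k else 0)"
    by (rule tendsto_lowerbound[OF lim ev]) simp
  then show ?thesis by simp
qed

lemma fwd:
  fixes a :: "'m::finite \<Rightarrow> nat ^ 'n::finite"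
  assumes "\<And>i. i \<notin> E \<Longrightarrow> sum (lam i) E = 1 \<and> (\<Sum>j\<in>E. lam i j *\<^sub>R col_real (a j)) = col_real (a i)"
  shows "exp (col_real (a k) \<bullet> x) = Ufull E lam (\<lambda>j. exp (col_real (a j) \<bullet> x)) k"
proof (cases "k \<in> E")
  case True then show ?thesis by (simp add: Ufull_def)
next
  case False
  have "Uf E lam (\<lambda>j. exp (col_real (a j) \<bullet> x)) k = (\<Prod>j\<in>E. exp (lam k j * (col_real (a j) \<bullet> x)))"
    unfolding Uf_def by (intro prod.cong refl) (simp add: powr_def)
  also have "\<dots> = exp (\<Sum>j\<in>E. lam k j * (col_real (a j) \<bullet> x))"
    by (rule exp_sum[symmetric]) simp
  also have "(\<Sum>j\<in>E. lam k j * (col_real (a j) \<bullet> x)) = col_real (a k) \<bullet> x"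
    using assms[OF False] by (metis (no_types, lifting) inner_scaleR_left inner_sum_left sum.cong)
  finally show ?thesis using False by (simp add: Ufull_def)
qed

lemma bwd:
  fixes a :: "'m::finite \<Rightarrow> nat ^ 'n::finite"
  assumes lin: "\<And>t. \<exists>x s. \<forall>j\<in>E. col_real (a j) \<bullet> x + s = t j"
    and lam: "\<And>i. i \<notin> E \<Longrightarrow> sum (lam i) E = 1 \<and> (\<Sum>j\<in>E. lam i j *\<^sub>R col_real (a j)) = col_real (a i)"
    and u: "\<forall>j\<in>E. u j > 0"
  shows "\<exists>x s. s > 0 \<and> (\<forall>k. exp (col_real (a k) \<bullet> x) = s * Ufull E lam u k)"
proof -
  obtain x s0 where xs: "\<forall>j\<in>E. col_real (a j) \<bullet> x + s0 = ln (u j)"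
    using lin[of "\<lambda>j. ln (u j)"] by blast
  have "exp (col_real (a k) \<bullet> x) = exp (- s0) * Ufull E lam u k" for k
  proof (cases "k \<in> E")
    case True
    then have "col_real (a k) \<bullet> x = ln (u k) + (- s0)" using xs by force
    then have "exp (col_real (a k) \<bullet> x) = exp (ln (u k)) * exp (- s0)" by (simp add: exp_add[symmetric])
    then show ?thesis using True u by (simp add: Ufull_def)
  next
    case False
    have "col_real (a k) \<bullet> x = (\<Sum>j\<in>E. lam k j * (col_real (a j) \<bullet> x))"
      using lam[OF False] by (metis (no_types, lifting) inner_scaleR_left inner_sum_left sum.cong)
    also have "\<dots> = (\<Sum>j\<in>E. lam k j * ln (u j) + lam k j * (- s0))"
    proof (intro sum.cong refl)
      fix j assume "j \<in> E"
      then have "col_real (a j) \<bullet> x = ln (u j) + (- s0)" using xs by force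
      then show "lam k j * (col_real (a j) \<bullet> x) = lam k j * ln (u j) + lam k j * (- s0)"
        by (simp only: distrib_left)
    qed
    also have "\<dots> = (\<Sum>j\<in>E. lam k j * ln (u j)) + (- s0)"
      using lam[OF False] by (simp add: sum.distrib sum_subtractf flip: sum_distrib_right)
    finally have "exp (col_real (a k) \<bullet> x) = exp (\<Sum>j\<in>E. lam k j * ln (u j)) * exp (- s0)"
      by (simp add: exp_diff exp_minus divide_inverse)
    also have "exp (\<Sum>j\<in>E. lam k j * ln (u j)) = Uf E lam u k"
      unfolding Uf_def exp_sum[OF finite] using u by (intro prod.cong refl) (auto simp: powr_def mult.commute)
    finally show ?thesis using False by (simp add: Ufull_def)
  qed
  then show ?thesis by (intro exI[of _ x] exI[of _ "exp (- s0)"]) auto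
qed

lemma amgm:
  fixes l r :: "'a \<Rightarrow> real"
  assumes "finite S" "\<And>j. j\<in>S \<Longrightarrow> l j \<ge> 0" "sum l S = 1" "\<And>j. j\<in>S \<Longrightarrow> r j > 0"
  shows "(\<Prod>j\<in>S. r j powr l j) \<le> (\<Sum>j\<in>S. l j * r j)"
proof -
  have ne: "S \<noteq> {}" using assms(3) by auto
  have "(\<Prod>j\<in>S. r j powr l j) = (\<Prod>j\<in>S. exp (l j * ln (r j)))"
  proof (intro prod.cong refl)
    fix j assume "j \<in> S"
    then have "r j > 0" by (rule assms(4))
    then show "r j powr l j = exp (l j * ln (r j))" by (simp add: powr_def)
  qed
  also have "\<dots> = exp (\<Sum>j\<in>S. l j *\<^sub>R ln (r j))"
    using assms(1) by (simp add: exp_sum)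
  also have "\<dots> \<le> (\<Sum>j\<in>S. l j * exp (ln (r j)))"
    by (rule convex_on_sum[OF assms(1) ne exp_convex assms(3)]) (auto simp: assms(2))
  also have "\<dots> = (\<Sum>j\<in>S. l j * r j)"
    using assms(4) by (intro sum.cong) auto
  finally show ?thesis .
qed

lemma Uf_pos: "\<forall>j\<in>E. u j > 0 \<Longrightarrow> Uf E lam u i > 0"
  unfolding Uf_def by (intro prod_pos) auto

lemma cand_half:
  fixes lam :: "'m \<Rightarrow> 'm \<Rightarrow> real"
  assumes fin: "finite E" and lam: "\<forall>j\<in>E. 0 \<le> lam i j" "sum (lam i) E = 1"
    and d: "0 \<le> dd" and u: "\<forall>j\<in>E. u j > 0" and v: "\<forall>j\<in>E. v j > 0"
  shows "dd * Uf E lam v i \<le> (\<Sum>j\<in>E. (lam i j * dd * Uf E lam u i / u j) * v j)"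
proof -
  have Upos: "Uf E lam u i > 0" using u by (rule Uf_pos)
  have "Uf E lam v i = Uf E lam u i * (\<Prod>j\<in>E. (v j / u j) powr lam i j)"
  proof -
    have "(\<Prod>j\<in>E. (v j / u j) powr lam i j) = (\<Prod>j\<in>E. v j powr lam i j / u j powr lam i j)"
      using u v by (intro prod.cong refl) (simp add: powr_divide less_imp_le)
    also have "\<dots> = Uf E lam v i / Uf E lam u i"
      unfolding Uf_def by (rule prod_dividef)
    finally show ?thesis using Upos by simp
  qed
  also have "\<dots> \<le> Uf E lam u i * (\<Sum>j\<in>E. lam i j * (v j / u j))"
    using Upos by (intro mult_left_mono amgm fin) (use lam u v in auto)
  finally have "dd * Uf E lam v i \<le> dd * (Uf E lam u i * (\<Sum>j\<in>E. lam i j * (v j / u j)))"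
    using d by (rule mult_left_mono)
  also have "\<dots> = (\<Sum>j\<in>E. (lam i j * dd * Uf E lam u i / u j) * v j)"
    by (simp add: sum_distrib_left algebra_simps)
  finally show ?thesis .
qed

lemma core:
  fixes e d :: "'m::finite \<Rightarrow> real" and lam :: "'m \<Rightarrow> 'm \<Rightarrow> real" and E :: "'m set"
  assumes lam: "\<And>i. i \<notin> E \<Longrightarrow> (\<forall>j\<in>E. 0 \<le> lam i j) \<and> sum (lam i) E = 1"
    and d: "\<And>i. 0 \<le> d i"
    and H: "\<And>u. \<forall>j\<in>E. u j > 0 \<Longrightarrow> (\<Sum>i\<in>-E. d i * Uf E lam u i) \<le> (\<Sum>j\<in>E. e j * u j)"
  shows "\<exists>w. (\<forall>i j. 0 \<le> w i j) \<and> (\<forall>j\<in>E. (\<Sum>i\<in>-E. w i j) \<le> e j) \<and>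
    (\<forall>i. i \<notin> E \<longrightarrow> (\<forall>u. (\<forall>j\<in>E. u j > 0) \<longrightarrow> d i * Uf E lam u i \<le> (\<Sum>j\<in>E. w i j * u j)))"
proof -
  define Wok where "Wok W \<longleftrightarrow> (\<forall>p. 0 \<le> W $ p) \<and> (\<forall>i j. \<not> (i \<notin> E \<and> j \<in> E) \<longrightarrow> W $ (i,j) = 0) \<and>
    (\<forall>i. i \<notin> E \<longrightarrow> (\<forall>u. (\<forall>j\<in>E. u j > 0) \<longrightarrow> d i * Uf E lam u i \<le> (\<Sum>j\<in>E. W $ (i,j) * u j)))"
    for W :: "real^('m \<times> 'm)"
  have Wz: "W $ (i,j) = 0" if "Wok W" "\<not> (i \<notin> E \<and> j \<in> E)" for W i j
    using that unfolding Wok_def by blast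
  have Wnn: "0 \<le> W $ p" if "Wok W" for W p
    using that unfolding Wok_def by blast
  define K where "K = {y :: real^'m. (\<forall>j. j \<notin> E \<longrightarrow> y $ j = 0) \<and> (\<exists>W. Wok W \<and> (\<forall>j\<in>E. (\<Sum>i\<in>-E. W $ (i,j)) \<le> y $ j))}"
  define cW where "cW u = (\<chi> p. if fst p \<notin> E \<and> snd p \<in> E then lam (fst p) (snd p) * d (fst p) * Uf E lam u (fst p) / u (snd p) else 0)"
    for u :: "'m \<Rightarrow> real"
  define cy where "cy u = (\<chi> j. if j \<in> E then (\<Sum>i\<in>-E. cW u $ (i,j)) else 0)" for u :: "'m \<Rightarrow> real"
  have cand: "Wok (cW u)" if u: "\<forall>j\<in>E. u j > 0" for u
    unfolding Wok_def
  proof (intro conjI allI impI)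
    fix p :: "'m \<times> 'm"
    show "0 \<le> cW u $ p"
      using u lam d Uf_pos[OF u, of lam "fst p"] by (auto simp: cW_def intro!: mult_nonneg_nonneg divide_nonneg_pos)
  next
    fix i j assume "\<not> (i \<notin> E \<and> j \<in> E)"
    then show "cW u $ (i, j) = 0" by (auto simp: cW_def)
  next
    fix i and v :: "'m \<Rightarrow> real" assume i: "i \<notin> E" and v: "\<forall>j\<in>E. 0 < v j"
    have "d i * Uf E lam v i \<le> (\<Sum>j\<in>E. (lam i j * d i * Uf E lam u i / u j) * v j)"
      using lam[OF i] by (intro cand_half d u v) auto
    also have "\<dots> = (\<Sum>j\<in>E. cW u $ (i, j) * v j)"
      using i by (intro sum.cong refl) (simp add: cW_def)
    finally show "d i * Uf E lam v i \<le> (\<Sum>j\<in>E. cW u $ (i, j) * v j)" .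
  qed
  have cyK: "cy u \<in> K" if u: "\<forall>j\<in>E. u j > 0" for u
    unfolding K_def using cand[OF u] by (auto simp: cy_def)
  have Kpos: "0 \<le> y $ j" if "y \<in> K" "j \<in> E" for y j
  proof -
    obtain W where W: "Wok W" "\<forall>j\<in>E. (\<Sum>i\<in>-E. W $ (i,j)) \<le> y $ j" using \<open>y \<in> K\<close> by (auto simp: K_def)
    have "0 \<le> (\<Sum>i\<in>-E. W $ (i,j))" using W(1) by (intro sum_nonneg) (auto simp: Wok_def)
    then show ?thesis using W(2) that(2) by force
  qed
  have Kinner: "inner a y = (\<Sum>j\<in>E. a $ j * y $ j)" if "y \<in> K" for a y
  proof -
    have "inner a y = (\<Sum>j\<in>E. a $ j * y $ j) + (\<Sum>j\<in>-E. a $ j * y $ j)"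
      by (simp add: inner_vec_def sum_split_E[of _ E])
    also have "(\<Sum>j\<in>-E. a $ j * y $ j) = 0" using that by (auto simp: K_def)
    finally show ?thesis by simp
  qed
  have convK: "convex K"
    unfolding convex_def
  proof (intro ballI allI impI)
    fix x y and \<alpha> \<beta> :: real assume xK: "x \<in> K" and yK: "y \<in> K" and ab: "0 \<le> \<alpha>" "0 \<le> \<beta>" "\<alpha> + \<beta> = 1"
    obtain Wx where Wx: "Wok Wx" "\<forall>j\<in>E. (\<Sum>i\<in>-E. Wx $ (i,j)) \<le> x $ j" using xK by (auto simp: K_def)
    obtain Wy where Wy: "Wok Wy" "\<forall>j\<in>E. (\<Sum>i\<in>-E. Wy $ (i,j)) \<le> y $ j" using yK by (auto simp: K_def)
    define W where "W = \<alpha> *\<^sub>R Wx + \<beta> *\<^sub>R Wy"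
    have "Wok W" unfolding Wok_def
    proof (intro conjI allI impI)
      fix p
      have "0 \<le> Wx $ p" "0 \<le> Wy $ p" using Wx(1) Wy(1) unfolding Wok_def by blast+
      then show "0 \<le> W $ p" using ab by (simp add: W_def)
    next
      fix i j assume "\<not> (i \<notin> E \<and> j \<in> E)"
      then have "Wx $ (i,j) = 0" "Wy $ (i,j) = 0" using Wx(1) Wy(1) unfolding Wok_def by blast+
      then show "W $ (i, j) = 0" by (simp add: W_def)
    next
      fix i and u :: "'m \<Rightarrow> real" assume i: "i \<notin> E" and u: "\<forall>j\<in>E. 0 < u j"
      have hx: "d i * Uf E lam u i \<le> (\<Sum>j\<in>E. Wx $ (i,j) * u j)" using Wx(1) i u by (simp add: Wok_def)
      have hy: "d i * Uf E lam u i \<le> (\<Sum>j\<in>E. Wy $ (i,j) * u j)" using Wy(1) i u by (simp add: Wok_def)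
      have "d i * Uf E lam u i = \<alpha> * (d i * Uf E lam u i) + \<beta> * (d i * Uf E lam u i)"
        using ab(3) by (simp add: algebra_simps flip: distrib_right)
      also have "\<dots> \<le> \<alpha> * (\<Sum>j\<in>E. Wx $ (i,j) * u j) + \<beta> * (\<Sum>j\<in>E. Wy $ (i,j) * u j)"
        using hx hy ab by (intro add_mono mult_left_mono) auto
      also have "\<dots> = (\<Sum>j\<in>E. W $ (i, j) * u j)"
        by (simp add: W_def sum_distrib_left sum.distrib algebra_simps)
      finally show "d i * Uf E lam u i \<le> (\<Sum>j\<in>E. W $ (i, j) * u j)" .
    qed
    moreover have "\<forall>j\<in>E. (\<Sum>i\<in>-E. W $ (i,j)) \<le> (\<alpha> *\<^sub>R x + \<beta> *\<^sub>R y) $ j"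
    proof
      fix j assume j: "j \<in> E"
      have "(\<Sum>i\<in>-E. W $ (i,j)) = \<alpha> * (\<Sum>i\<in>-E. Wx $ (i,j)) + \<beta> * (\<Sum>i\<in>-E. Wy $ (i,j))"
        by (simp add: W_def sum_distrib_left sum.distrib)
      also have "\<dots> \<le> \<alpha> * x $ j + \<beta> * y $ j"
        using Wx(2) Wy(2) j ab by (intro add_mono mult_left_mono) auto
      finally show "(\<Sum>i\<in>-E. W $ (i,j)) \<le> (\<alpha> *\<^sub>R x + \<beta> *\<^sub>R y) $ j" by simp
    qed
    moreover have "\<forall>j. j \<notin> E \<longrightarrow> (\<alpha> *\<^sub>R x + \<beta> *\<^sub>R y) $ j = 0"
      using xK yK by (simp add: K_def)
    ultimately show "\<alpha> *\<^sub>R x + \<beta> *\<^sub>R y \<in> K" unfolding K_def by blast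
  qed
  have closedK: "closed K"
    unfolding closed_sequential_limits
  proof (intro allI impI, elim conjE)
    fix Y :: "nat \<Rightarrow> real^'m" and l assume YK: "\<forall>n. Y n \<in> K" and Yl: "Y \<longlonglongrightarrow> l"
    have "\<forall>n. \<exists>W. Wok W \<and> (\<forall>j\<in>E. (\<Sum>i\<in>-E. W $ (i,j)) \<le> Y n $ j)" using YK by (auto simp: K_def)
    then obtain W where W: "\<And>n. Wok (W n)" "\<And>n j. j \<in> E \<Longrightarrow> (\<Sum>i\<in>-E. W n $ (i,j)) \<le> Y n $ j"
      by metis
    have "Bseq Y" using Yl by (intro convergent_imp_Bseq convergentI)
    then obtain B where B: "B > 0" "\<And>n. norm (Y n) \<le> B" by (auto simp: Bseq_def)
    have entb: "\<bar>W n $ p\<bar> \<le> B" for n p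
    proof (cases "fst p \<notin> E \<and> snd p \<in> E")
      case True
      obtain i j where p: "p = (i,j)" by (cases p)
      have "\<bar>W n $ p\<bar> = W n $ (i,j)" using W(1)[of n] by (simp add: Wok_def p)
      also have "\<dots> \<le> (\<Sum>i\<in>-E. W n $ (i,j))"
        using True W(1)[of n] by (intro member_le_sum) (auto simp: p Wok_def)
      also have "\<dots> \<le> Y n $ j" using W(2) True p by auto
      also have "\<dots> \<le> norm (Y n)" using component_le_norm_cart[of "Y n" j] by simp
      finally show ?thesis using B(2)[of n] by simp
    next
      case False
      obtain i j where p: "p = (i,j)" by (cases p)
      have "W n $ p = 0" using Wz[OF W(1)[of n]] False p by auto
      then show ?thesis using B by simp
    qed
    have "bounded (range W)"
      unfolding bounded_iff
    proof (intro exI ballI)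
      fix x assume "x \<in> range W"
      then obtain n where x: "x = W n" by auto
      have "norm x \<le> (\<Sum>p\<in>UNIV. \<bar>x $ p\<bar>)" by (rule norm_le_l1_cart)
      also have "\<dots> \<le> (\<Sum>p\<in>(UNIV::('m\<times>'m) set). B)" unfolding x by (intro sum_mono entb)
      finally show "norm x \<le> (\<Sum>p\<in>(UNIV::('m\<times>'m) set). B)" .
    qed
    then obtain Wl r where r: "strict_mono r" "(W \<circ> r) \<longlonglongrightarrow> Wl"
      using bounded_imp_convergent_subsequence by blast
    have Wlim: "(\<lambda>n. W (r n) $ p) \<longlonglongrightarrow> Wl $ p" for p
      using tendsto_vec_nth[OF r(2), of p] by (simp add: o_def)
    have Ylim: "(\<lambda>n. Y (r n) $ j) \<longlonglongrightarrow> l $ j" for j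
      using tendsto_vec_nth[OF LIMSEQ_subseq_LIMSEQ[OF Yl r(1)], of j] by (simp add: o_def)
    have "Wok Wl" unfolding Wok_def
    proof (intro conjI allI impI)
      fix p show "0 \<le> Wl $ p"
        using Wnn[OF W(1)] by (intro LIMSEQ_le_const[OF Wlim]) auto
    next
      fix i j assume ij: "\<not> (i \<notin> E \<and> j \<in> E)"
      have "(\<lambda>n. W (r n) $ (i,j)) = (\<lambda>n. 0)" using Wz[OF W(1)] ij by auto
      then show "Wl $ (i, j) = 0" using Wlim[of "(i,j)"] LIMSEQ_unique by (metis tendsto_const)
    next
      fix i and u :: "'m \<Rightarrow> real" assume i: "i \<notin> E" and u: "\<forall>j\<in>E. 0 < u j"
      have "(\<lambda>n. \<Sum>j\<in>E. W (r n) $ (i,j) * u j) \<longlonglongrightarrow> (\<Sum>j\<in>E. Wl $ (i,j) * u j)"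
        by (intro tendsto_sum tendsto_mult_right Wlim)
      then show "d i * Uf E lam u i \<le> (\<Sum>j\<in>E. Wl $ (i, j) * u j)"
        using W(1) i u by (intro LIMSEQ_le_const) (auto simp: Wok_def)
    qed
    moreover have "\<forall>j\<in>E. (\<Sum>i\<in>-E. Wl $ (i,j)) \<le> l $ j"
    proof
      fix j assume j: "j \<in> E"
      have "(\<lambda>n. \<Sum>i\<in>-E. W (r n) $ (i,j)) \<longlonglongrightarrow> (\<Sum>i\<in>-E. Wl $ (i,j))"
        by (intro tendsto_sum Wlim)
      then show "(\<Sum>i\<in>-E. Wl $ (i,j)) \<le> l $ j"
        using W(2) j by (intro LIMSEQ_le[OF _ Ylim[of j]]) auto
    qed
    moreover have "\<forall>j. j \<notin> E \<longrightarrow> l $ j = 0"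
    proof (intro allI impI)
      fix j assume j: "j \<notin> E"
      have "(\<lambda>n. Y (r n) $ j) = (\<lambda>n. 0)" using YK j by (auto simp: K_def)
      then show "l $ j = 0" using Ylim[of j] LIMSEQ_unique by (metis tendsto_const)
    qed
    ultimately show "l \<in> K" unfolding K_def by blast
  qed
  define T where "T = ((\<chi> j. if j \<in> E then e j else 0) :: real^'m)"
  have "T \<in> K"
  proof (rule ccontr)
    assume TK: "T \<notin> K"
    obtain a b where ab: "inner a T < b" "\<forall>y\<in>K. inner a y > b"
      using separating_hyperplane_closed_point[OF convK closedK TK] by blast
    have aT: "inner a T = (\<Sum>j\<in>E. a $ j * e j)"
    proof -
      have "inner a T = (\<Sum>j\<in>UNIV. if j \<in> E then a $ j * e j else 0)"
        by (simp add: inner_vec_def T_def if_distrib cong: if_cong)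
      then show ?thesis by (simp add: sum_if_in)
    qed
    have one: "\<forall>j\<in>E. (\<lambda>_. 1::real) j > 0" by simp
    have anneg: "0 \<le> a $ j0" if j0: "j0 \<in> E" for j0
    proof (rule ccontr)
      assume neg: "\<not> 0 \<le> a $ j0"
      define k0 where "k0 = cy (\<lambda>_. 1)"
      have k0K: "k0 \<in> K" unfolding k0_def by (rule cyK[OF one])
      define t where "t = (inner a k0 - b) / (- (a $ j0))"
      have "b < inner a k0" using ab(2) k0K by blast
      then have t0: "0 \<le> t" using neg unfolding t_def by (intro divide_nonneg_pos) auto
      define k' where "k' = k0 + t *\<^sub>R axis j0 1"
      have "k' \<in> K"
      proof -
        obtain W where W: "Wok W" "\<forall>j\<in>E. (\<Sum>i\<in>-E. W $ (i,j)) \<le> k0 $ j" using k0K by (auto simp: K_def)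
        have "\<forall>j\<in>E. (\<Sum>i\<in>-E. W $ (i,j)) \<le> k' $ j"
          using W(2) t0 by (auto simp: k'_def axis_def intro: order_trans[OF _ le_add_same_cancel1[THEN iffD2]])
        moreover have "\<forall>j. j \<notin> E \<longrightarrow> k' $ j = 0" using k0K j0 by (auto simp: K_def k'_def axis_def)
        ultimately show ?thesis using W(1) unfolding K_def by blast
      qed
      moreover have "inner a k' = b"
      proof -
        have "inner a k' = inner a k0 + t * a $ j0"
          by (simp add: k'_def inner_add_right inner_axis)
        also have "t * a $ j0 = b - inner a k0" using neg by (simp add: t_def field_simps)
        finally show ?thesis by simp
      qed
      ultimately show False using ab(2) by fastforce
    qed
    define S where "S = (\<Sum>j\<in>E. e j)"
    define \<delta> where "\<delta> = (b - inner a T) / (2 * (\<bar>S\<bar> + 1))"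
    have \<delta>0: "0 < \<delta>" using ab(1) by (simp add: \<delta>_def)
    have \<delta>S: "\<delta> * S < b - inner a T"
    proof -
      have "\<delta> * S \<le> \<delta> * (\<bar>S\<bar> + 1)" using \<delta>0 by (intro mult_left_mono) auto
      also have "\<dots> = (b - inner a T) / 2" unfolding \<delta>_def by (simp add: field_simps)
      finally show ?thesis using ab(1) by simp
    qed
    define u' where "u' j = a $ j + \<delta>" for j
    have u'pos: "\<forall>j\<in>E. u' j > 0" using anneg \<delta>0 by (auto simp: u'_def add_nonneg_pos)
    define y where "y = cy u'"
    have yK: "y \<in> K" unfolding y_def by (rule cyK[OF u'pos])
    have "b < inner a y" using ab(2) yK by blast
    also have "inner a y = (\<Sum>j\<in>E. a $ j * y $ j)" by (rule Kinner[OF yK])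
    also have "\<dots> \<le> (\<Sum>j\<in>E. u' j * y $ j)"
      using Kpos[OF yK] \<delta>0 by (intro sum_mono mult_right_mono) (auto simp: u'_def)
    also have "(\<Sum>j\<in>E. u' j * y $ j) = (\<Sum>i\<in>-E. d i * Uf E lam u' i)"
    proof -
      have "(\<Sum>j\<in>E. u' j * y $ j) = (\<Sum>j\<in>E. \<Sum>i\<in>-E. lam i j * (d i * Uf E lam u' i))"
        using u'pos by (intro sum.cong refl) (auto simp: y_def cy_def cW_def sum_distrib_left intro!: sum.cong)
      also have "\<dots> = (\<Sum>i\<in>-E. \<Sum>j\<in>E. lam i j * (d i * Uf E lam u' i))" by (rule sum.swap)
      also have "\<dots> = (\<Sum>i\<in>-E. d i * Uf E lam u' i)"
        using lam by (intro sum.cong refl) (simp add: flip: sum_distrib_right)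
      finally show ?thesis .
    qed
    also have "\<dots> \<le> (\<Sum>j\<in>E. e j * u' j)" by (rule H[OF u'pos])
    also have "\<dots> = inner a T + \<delta> * S"
      by (simp add: aT S_def u'_def algebra_simps sum.distrib sum_distrib_left)
    finally show False using \<delta>S by simp
  qed
  then obtain W where W: "Wok W" "\<forall>j\<in>E. (\<Sum>i\<in>-E. W $ (i,j)) \<le> T $ j" by (auto simp: K_def)
  show ?thesis
    using W by (intro exI[of _ "\<lambda>i j. W $ (i,j)"]) (auto simp: Wok_def T_def)
qed

lemma sage_nns: "c \<in> C_SAGE a \<Longrightarrow> c \<in> C_NNS a"
proof -
  assume "c \<in> C_SAGE a"
  then obtain \<nu> where nu: "\<And>k. \<nu> k \<in> C_AGE a k" and c: "c = (\<lambda>i. \<Sum>k\<in>UNIV. \<nu> k i)"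
    unfolding C_SAGE_def by blast
  have "0 \<le> Sig a c x" for x
  proof -
    have "Sig a c x = (\<Sum>k\<in>UNIV. Sig a (\<nu> k) x)"
      unfolding Sig_def c by (simp add: sum_distrib_right) (rule sum.swap)
    also have "\<dots> \<ge> 0" using nu by (intro sum_nonneg) (auto simp: C_AGE_def C_NNS_def)
    finally show ?thesis .
  qed
  then show "c \<in> C_NNS a" by (simp add: C_NNS_def)
qed

lemma nns_poly_pos:
  assumes "c \<in> C_NNS a" "\<forall>j. 0 < y $ j"
  shows "0 \<le> Poly a c y"
proof -
  define x where "x = (\<chi> j. ln (y $ j))"
  have y: "y = (\<chi> j. (\<chi> j. 1) $ j * exp (x $ j))" using assms(2) by (simp add: x_def vec_eq_iff)
  have "Poly a c y = Sig a c x"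
    unfolding y Poly_sign_exp Sig_def chi_ones by simp
  then show ?thesis using assms(1) by (simp add: C_NNS_def)
qed

lemma nns_poly_nonneg:
  assumes "c \<in> C_NNS a" "\<forall>j. 0 \<le> y $ j"
  shows "0 \<le> Poly a c y"
proof -
  have eq: "Poly a c (\<chi> j. y $ j + \<epsilon>) = (\<Sum>i\<in>UNIV. c i * (\<Prod>j\<in>UNIV. (y $ j + \<epsilon>) ^ (a i $ j)))" for \<epsilon>
    by (simp add: Poly_def)
  have lim: "((\<lambda>\<epsilon>. \<Sum>i\<in>UNIV. c i * (\<Prod>j\<in>UNIV. (y $ j + \<epsilon>) ^ (a i $ j))) \<longlongrightarrow>
       (\<Sum>i\<in>UNIV. c i * (\<Prod>j\<in>UNIV. (y $ j + 0) ^ (a i $ j)))) (at_right 0)"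
    by (intro tendsto_intros)
  have ev: "\<forall>\<^sub>F \<epsilon> in at_right 0. 0 \<le> (\<Sum>i\<in>UNIV. c i * (\<Prod>j\<in>UNIV. (y $ j + \<epsilon>) ^ (a i $ j)))"
  proof (rule eventually_mono[OF eventually_at_right_less])
    fix \<epsilon> :: real assume "0 < \<epsilon>"
    then have "0 \<le> Poly a c (\<chi> j. y $ j + \<epsilon>)"
      using assms by (intro nns_poly_pos) (auto intro: add_nonneg_pos)
    then show "0 \<le> (\<Sum>i\<in>UNIV. c i * (\<Prod>j\<in>UNIV. (y $ j + \<epsilon>) ^ (a i $ j)))" by (simp add: eq)
  qed
  have "0 \<le> (\<Sum>i\<in>UNIV. c i * (\<Prod>j\<in>UNIV. (y $ j + 0) ^ (a i $ j)))"
    by (rule tendsto_lowerbound[OF lim ev]) simp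
  then show ?thesis by (simp add: Poly_def)
qed

lemma poly_ge: "Poly a (sig_rep a c) (\<chi> j. \<bar>x $ j\<bar>) \<le> Poly a c x"
  unfolding Poly_def
proof (intro sum_mono)
  fix i
  define P where "P = (\<Prod>j\<in>UNIV. (x $ j) ^ (a i $ j))"
  have aP: "(\<Prod>j\<in>UNIV. ((\<chi> j. \<bar>x $ j\<bar>) $ j) ^ (a i $ j)) = \<bar>P\<bar>"
    by (simp add: P_def abs_prod power_abs)
  show "sig_rep a c i * (\<Prod>j\<in>UNIV. ((\<chi> j. \<bar>x $ j\<bar>) $ j) ^ (a i $ j)) \<le> c i * (\<Prod>j\<in>UNIV. (x $ j) ^ (a i $ j))"
    unfolding aP P_def[symmetric]
  proof (cases "even_col (a i)")
    case True
    then have "\<bar>P\<bar> = P" unfolding P_def abs_prod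
      by (intro prod.cong refl) (simp add: power_abs power_even_abs even_col_def)
    then show "sig_rep a c i * \<bar>P\<bar> \<le> c i * P" using True by (simp add: sig_rep_def)
  next
    case False
    have "- \<bar>c i * P\<bar> \<le> c i * P" by simp
    then show "sig_rep a c i * \<bar>P\<bar> \<le> c i * P" using False by (simp add: sig_rep_def abs_mult)
  qed
qed

lemma poly_sage_sub: "C_POLY_SAGE a \<subseteq> C_NNP a"
proof
  fix c assume "c \<in> C_POLY_SAGE a"
  then have ns: "sig_rep a c \<in> C_NNS a" by (simp add: C_POLY_SAGE_def sage_nns)
  have "0 \<le> Poly a c x" for x
    using nns_poly_nonneg[OF ns, of "\<chi> j. \<bar>x $ j\<bar>"] poly_ge[of a c x] by simp
  then show "c \<in> C_NNP a" by (simp add: C_NNP_def)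
qed

lemma nnp_sub:
  fixes a :: "'m::finite \<Rightarrow> nat ^ 'n::finite"
  assumes injA: "inj a"
    and aff: "\<not> affine_dependent {v. v extreme_point_of Newton a}"
    and F2: "F2_lin_indep_mod2 a (nonextremal a)"
  shows "C_NNP a \<subseteq> C_POLY_SAGE a"
proof
  fix c assume cN: "c \<in> C_NNP a"
  define E where "E = {i. col_real (a i) extreme_point_of Newton a}"
  define f where "f j = col_real (a j)" for j
  have nonE: "nonextremal a = - E" by (auto simp: nonextremal_def E_def)
  have injc: "inj_on f E"
    using injA col_real_inj unfolding f_def inj_on_def inj_def by blast
  have X: "{v. v extreme_point_of Newton a} = f ` E"
  proof (intro set_eqI iffI)
    fix v assume "v \<in> {v. v extreme_point_of Newton a}"
    then have ve: "v extreme_point_of Newton a" by simp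
    then have "v \<in> range (\<lambda>i. col_real (a i))" unfolding Newton_def by (rule extreme_point_of_convex_hull)
    then obtain i where "v = col_real (a i)" by auto
    then show "v \<in> f ` E" using ve by (auto simp: E_def f_def)
  next
    fix v assume "v \<in> f ` E" then show "v \<in> {v. v extreme_point_of Newton a}"
      by (auto simp: E_def f_def)
  qed
  have hull: "\<forall>i. \<exists>l. i \<notin> E \<longrightarrow> (\<forall>j\<in>E. 0 \<le> l j) \<and> sum l E = 1 \<and> (\<Sum>j\<in>E. l j *\<^sub>R f j) = f i"
  proof
    fix i
    have "f i \<in> Newton a" unfolding Newton_def f_def by (rule hull_inc) auto
    also have "Newton a = convex hull (f ` E)"
      unfolding Newton_def using Krein_Milman_polytope[of "range (\<lambda>i. col_real (a i))"] X
      by (simp add: Newton_def)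
    finally obtain u where u: "\<forall>x\<in>f ` E. 0 \<le> u x" "sum u (f ` E) = 1" "(\<Sum>x\<in>f ` E. u x *\<^sub>R x) = f i"
      by (auto simp: convex_hull_finite)
    have "sum (u \<circ> f) E = 1" using u(2) sum.reindex[OF injc, of u] by simp
    moreover have "(\<Sum>j\<in>E. (u \<circ> f) j *\<^sub>R f j) = f i" using u(3) sum.reindex[OF injc, of "\<lambda>x. u x *\<^sub>R x"] by simp
    ultimately show "\<exists>l. i \<notin> E \<longrightarrow> (\<forall>j\<in>E. 0 \<le> l j) \<and> sum l E = 1 \<and> (\<Sum>j\<in>E. l j *\<^sub>R f j) = f i"
      using u(1) by (intro exI[of _ "u \<circ> f"]) auto
  qed
  then obtain lam where lam: "\<And>i. i \<notin> E \<Longrightarrow> (\<forall>j\<in>E. 0 \<le> lam i j) \<and> sum (lam i) E = 1 \<and> (\<Sum>j\<in>E. lam i j *\<^sub>R f j) = f i"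
    by metis
  have lam1: "lam i j < 1" if i: "i \<notin> E" and j: "j \<in> E" for i j
  proof (rule ccontr)
    assume "\<not> lam i j < 1"
    have fE: "finite E" by simp
    have sr: "sum (lam i) E = lam i j + sum (lam i) (E - {j})" by (rule sum.remove[OF fE j])
    have nn: "\<forall>k\<in>E - {j}. 0 \<le> lam i k" using lam[OF i] by auto
    have "sum (lam i) (E - {j}) \<le> 0" using sr lam[OF i] \<open>\<not> lam i j < 1\<close> by simp
    moreover have "0 \<le> sum (lam i) (E - {j})" using nn by (intro sum_nonneg) auto
    ultimately have z: "sum (lam i) (E - {j}) = 0" by linarith
    then have z2: "\<forall>k\<in>E - {j}. lam i k = 0" using sum_nonneg_eq_0_iff[of "E - {j}" "lam i"] nn by simp
    have l1: "lam i j = 1" using sr z lam[OF i] by simp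
    have "f i = (\<Sum>k\<in>E. lam i k *\<^sub>R f k)" using lam[OF i] by simp
    also have "\<dots> = lam i j *\<^sub>R f j + (\<Sum>k\<in>E - {j}. lam i k *\<^sub>R f k)" by (rule sum.remove[OF fE j])
    also have "(\<Sum>k\<in>E - {j}. lam i k *\<^sub>R f k) = 0" using z2 by simp
    finally have "f i = f j" using l1 by simp
    then have "i = j" using injA col_real_inj unfolding f_def inj_def by blast
    then show False using i j by simp
  qed
  have F4: "\<not> even_col (a i)" if "i \<notin> E" for i
  proof
    assume ev: "even_col (a i)"
    have "{i} \<subseteq> nonextremal a" using that nonE by simp
    moreover have "\<forall>j. even (\<Sum>k\<in>{i}. a k $ j)" using ev by (simp add: even_col_def)
    ultimately have "{i} = {}" using F2 unfolding F2_lin_indep_mod2_def by blast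
    then show False by simp
  qed
  have lin: "\<And>t. \<exists>x s. \<forall>j\<in>E. col_real (a j) \<bullet> x + s = t j"
    using linsys[OF injc, folded X, OF aff] by (simp add: f_def)
  have lamc: "\<And>i. i \<notin> E \<Longrightarrow> sum (lam i) E = 1 \<and> (\<Sum>j\<in>E. lam i j *\<^sub>R col_real (a j)) = col_real (a i)"
    using lam by (simp add: f_def)
  have G1: "0 \<le> (\<Sum>i\<in>UNIV. c i * chi a i s * exp (col_real (a i) \<bullet> x))" for s x
  proof -
    have "0 \<le> Poly a c (\<chi> j. s $ j * exp (x $ j))" using cN by (simp add: C_NNP_def)
    then show ?thesis by (simp only: Poly_sign_exp)
  qed
  have G2: "0 \<le> (\<Sum>k\<in>UNIV. (c k * chi a k s) * Ufull E lam u k)" if u: "\<forall>j\<in>E. u j > 0" for s u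
  proof -
    obtain x s0 where xs: "s0 > 0" "\<forall>k. exp (col_real (a k) \<bullet> x) = s0 * Ufull E lam u k"
      using bwd[OF lin lamc u] by blast
    have "0 \<le> (\<Sum>i\<in>UNIV. c i * chi a i s * exp (col_real (a i) \<bullet> x))" by (rule G1)
    also have "\<dots> = s0 * (\<Sum>k\<in>UNIV. (c k * chi a k s) * Ufull E lam u k)"
      using xs(2) by (simp add: sum_distrib_left mult_ac)
    finally show ?thesis using xs(1) by (simp add: zero_le_mult_iff)
  qed
  have G3: "0 \<le> c j * chi a j s" if j: "j \<in> E" for j s
  proof (rule vertex[of j E lam])
    show "j \<in> E" by (rule j)
    show "\<And>i. i \<notin> E \<Longrightarrow> sum (lam i) E = 1 \<and> lam i j < 1" using lamc lam1[OF _ j] by blast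
    show "\<And>u. \<forall>j\<in>E. 0 < u j \<Longrightarrow> 0 \<le> (\<Sum>k\<in>UNIV. (c k * chi a k s) * Ufull E lam u k)"
      by (rule G2)
  qed
  have G4: "sig_rep a c j = c j \<and> 0 \<le> c j \<and> (\<forall>s. sv s \<longrightarrow> c j * chi a j s = c j)" if j: "j \<in> E" for j
  proof -
    have c0: "0 \<le> c j" using G3[OF j, of "\<chi> j. 1"] by (simp add: chi_ones)
    show ?thesis
    proof (cases "even_col (a j)")
      case True
      then show ?thesis using c0 chi_even[of _ a j] by (simp add: sig_rep_def)
    next
      case False
      then obtain j' where odd: "odd (a j $ j')" by (auto simp: even_col_def)
      have "0 \<le> c j * chi a j (\<chi> jj. if jj = j' then -1 else 1)" by (rule G3[OF j])
      then have "0 \<le> - c j" using odd by (simp add: chi_flip)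
      then have "c j = 0" using c0 by simp
      then show ?thesis by (simp add: sig_rep_def)
    qed
  qed
  define ch where "ch = sig_rep a c"
  have "\<exists>s. sv s \<and> (\<forall>i\<in>nonextremal a. chi a i s = (if 0 \<le> c i then -1 else 1))"
    by (rule F2_surj[OF F2, rule_format]) simp
  then obtain s0 where s0: "sv s0" "\<forall>i\<in>nonextremal a. chi a i s0 = (if 0 \<le> c i then -1 else 1)"
    by blast
  have G5: "c k * chi a k s0 = ch k" for k
  proof (cases "k \<in> E")
    case True then show ?thesis using G4[OF True] s0(1) by (simp add: ch_def)
  next
    case False
    then have "chi a k s0 = (if 0 \<le> c k then -1 else 1)" using s0(2) nonE by auto
    then show ?thesis using F4[OF False] by (simp add: ch_def sig_rep_def)
  qed
  have chN: "ch i = - \<bar>c i\<bar>" if "i \<notin> E" for i using F4[OF that] by (simp add: ch_def sig_rep_def)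
  have G6: "(\<Sum>i\<in>-E. \<bar>c i\<bar> * Uf E lam u i) \<le> (\<Sum>j\<in>E. ch j * u j)" if u: "\<forall>j\<in>E. u j > 0" for u
  proof -
    have "0 \<le> (\<Sum>k\<in>UNIV. ch k * Ufull E lam u k)" using G2[OF u, of s0] by (simp add: G5)
    also have "\<dots> = (\<Sum>k\<in>E. ch k * Ufull E lam u k) + (\<Sum>k\<in>-E. ch k * Ufull E lam u k)"
      by (rule sum_split_E)
    also have "(\<Sum>k\<in>E. ch k * Ufull E lam u k) = (\<Sum>j\<in>E. ch j * u j)"
      by (intro sum.cong refl) (simp add: Ufull_def)
    also have "(\<Sum>k\<in>-E. ch k * Ufull E lam u k) = - (\<Sum>i\<in>-E. \<bar>c i\<bar> * Uf E lam u i)"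
      by (simp add: sum_negf[symmetric]) (intro sum.cong refl, simp add: Ufull_def chN)
    finally show ?thesis by simp
  qed
  obtain w where w: "\<forall>i j. 0 \<le> w i j" "\<forall>j\<in>E. (\<Sum>i\<in>-E. w i j) \<le> ch j"
    "\<forall>i. i \<notin> E \<longrightarrow> (\<forall>u. (\<forall>j\<in>E. u j > 0) \<longrightarrow> \<bar>c i\<bar> * Uf E lam u i \<le> (\<Sum>j\<in>E. w i j * u j))"
    using core[of E lam "\<lambda>i. \<bar>c i\<bar>" ch] lam G6 by auto
  define \<nu> where "\<nu> k l = (if k \<in> E then (if l = k then ch k - (\<Sum>i\<in>-E. w i k) else 0)
      else (if l \<in> E then w k l else if l = k then - \<bar>c k\<bar> else 0))" for k l
  have ageA: "\<nu> k \<in> C_AGE a k" for k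
  proof -
    have pos: "\<forall>i. i \<noteq> k \<longrightarrow> 0 \<le> \<nu> k i" using w(1) by (auto simp: \<nu>_def)
    have "0 \<le> Sig a (\<nu> k) x" for x
    proof (cases "k \<in> E")
      case True
      have "0 \<le> \<nu> k i * exp (col_real (a i) \<bullet> x)" for i
        using True w(2) by (auto simp: \<nu>_def)
      then show ?thesis unfolding Sig_def by (intro sum_nonneg) auto
    next
      case False
      define u where "u j = exp (col_real (a j) \<bullet> x)" for j
      have "Sig a (\<nu> k) x = (\<Sum>i\<in>E. \<nu> k i * u i) + (\<Sum>i\<in>-E. \<nu> k i * u i)"
        unfolding Sig_def u_def by (rule sum_split_E)
      also have "(\<Sum>i\<in>E. \<nu> k i * u i) = (\<Sum>i\<in>E. w k i * u i)"
        using False by (intro sum.cong refl) (simp add: \<nu>_def)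
      also have "(\<Sum>i\<in>-E. \<nu> k i * u i) = (\<Sum>i\<in>-E. if i = k then - \<bar>c k\<bar> * u k else 0)"
        using False by (intro sum.cong refl) (auto simp: \<nu>_def)
      also have "\<dots> = - \<bar>c k\<bar> * u k" using False by (simp add: sum.delta)
      also have "u k = Uf E lam u k"
        using fwd[OF lamc, of k x] False by (simp add: u_def[abs_def] Ufull_def)
      finally have "Sig a (\<nu> k) x = (\<Sum>i\<in>E. w k i * u i) - \<bar>c k\<bar> * Uf E lam u k" by simp
      moreover have "\<bar>c k\<bar> * Uf E lam u k \<le> (\<Sum>i\<in>E. w k i * u i)"
        using w(3) False by (simp add: u_def[abs_def])
      ultimately show ?thesis by simp
    qed
    then show ?thesis using pos by (simp add: C_AGE_def C_NNS_def)
  qed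
  have sumA: "ch = (\<lambda>i. \<Sum>k\<in>UNIV. \<nu> k i)"
  proof
    fix i
    have "(\<Sum>k\<in>UNIV. \<nu> k i) = (\<Sum>k\<in>E. \<nu> k i) + (\<Sum>k\<in>-E. \<nu> k i)" by (rule sum_split_E)
    also have "\<dots> = ch i"
    proof (cases "i \<in> E")
      case True
      have "(\<Sum>k\<in>E. \<nu> k i) = (\<Sum>k\<in>E. if k = i then ch k - (\<Sum>i\<in>-E. w i k) else 0)"
        by (intro sum.cong refl) (auto simp: \<nu>_def)
      also have "\<dots> = ch i - (\<Sum>i'\<in>-E. w i' i)" using True by (simp add: sum.delta')
      finally show ?thesis using True by (simp add: \<nu>_def)
    next
      case False
      have "(\<Sum>k\<in>E. \<nu> k i) = 0" using False by (intro sum.neutral) (auto simp: \<nu>_def)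
      moreover have "(\<Sum>k\<in>-E. \<nu> k i) = (\<Sum>k\<in>-E. if k = i then - \<bar>c i\<bar> else 0)"
        using False by (intro sum.cong refl) (auto simp: \<nu>_def)
      moreover have "\<dots> = - \<bar>c i\<bar>" using False by (simp add: sum.delta')
      ultimately show ?thesis using chN[OF False] by simp
    qed
    finally show "ch i = (\<Sum>k\<in>UNIV. \<nu> k i)" by simp
  qed
  have "ch \<in> C_SAGE a" unfolding C_SAGE_def using ageA sumA by blast
  then show "c \<in> C_POLY_SAGE a" by (simp add: C_POLY_SAGE_def ch_def)
qed

theorem mainTheorem15:
  fixes a :: "'m::finite \<Rightarrow> nat ^ 'n::finite"
  assumes "inj a"
    and "\<not> affine_dependent {v. v extreme_point_of Newton a}"
    and "F2_lin_indep_mod2 a (nonextremal a)"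
  shows "C_POLY_SAGE a = C_NNP a"
  using poly_sage_sub[of a] nnp_sub[OF assms] by blast

end
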